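(* Let $q\ge2$, $\mu,R>0$ and $\omega=\min\{1,\mu/4\}$. There is no sequence of $l_i$-shot ID codes for $\Pi^q_{n_i}$, $i=1,2,\dots$, with $n_i\to\infty$, $l_i/n_i^{\omega}\to0$, $M_i\ge 2^{R n_i^{l_i(q-1)}}$ messages, and type-I and type-II error probabilities satisfying $\lambda_{1,i}<n_i^{-\mu}$ and $\lambda_{2,i}<n_i^{-\mu}$ for all $i$.
   Context: Fix an integer $q\ge 2$ and let $\mathcal A_q=\{1,\dots,q\}$. For $n\ge1$ and $\sigma\in S_n$ (the symmetric group on $\{1,\dots,n\}$), $\sigma\mathbf x=(x_{\sigma^{-1}(1)},\dots,x_{\sigma^{-1}(n)})$ for $\mathbf x\in\mathcal A_q^n$. The $n$-block $q$-ary uniform permutation channel $\Pi^q_n$ has input/output alphabet $\mathcal A_q^n$ and $\Pi^q_n(\mathbf y\mid\mathbf x)=\frac1{n!}\sum_{\sigma\in S_n}\mathbf 1\{\mathbf y=\sigma\mathbf x\}$. Using it $l$ times (independently on each block) gives the channel $W^{(l)}$ on $(\mathcal A_q^n)^l$ with $W^{(l)}(\mathbf y^{(1)},\dots,\mathbf y^{(l)}\mid \mathbf x^{(1)},\dots,\mathbf x^{(l)})=\prod_{s=1}^l\Pi^q_n(\mathbf y^{(s)}\mid\mathbf x^{(s)})$. An $l$-shot ID code with $M$ messages for $\Pi^q_n$ (an "$(n,l,M,\lambda_1,\lambda_2)$ ID code") is a family $\{(Q_i,\mathcal D_i)\}_{i=1}^M$ with $Q_i$ a probability distribution on $(\mathcal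 A_q^n)^l$ and $\mathcal D_i\subseteq(\mathcal A_q^n)^l$; its error probabilities are $\lambda_{i\to j}=\sum_{\underline{\mathbf x}}Q_i(\underline{\mathbf x})\sum_{\underline{\mathbf y}\in\mathcal D_j}W^{(l)}(\underline{\mathbf y}\mid\underline{\mathbf x})$ ($i\neq j$), $\lambda_{i\not\to i}=\sum_{\underline{\mathbf x}}Q_i(\underline{\mathbf x})\sum_{\underline{\mathbf y}\notin\mathcal D_i}W^{(l)}(\underline{\mathbf y}\mid\underline{\mathbf x})$, type-I error probability $\lambda_1=\max_i\lambda_{i\not\to i}$, type-II error probability $\lambda_2=\max_{i\ne j}\lambda_{i\to j}$. *)

theory Defs
  imports "HOL-Analysis.Analysis" "HOL-Combinatorics.Permutations"
begin

definition blocks :: "nat \<Rightarrow> nat \<Rightarrow> nat list set" where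
  "blocks q n = {x. length x = n \<and> set x \<subseteq> {1..q}}"

definition tuples :: "nat \<Rightarrow> nat \<Rightarrow> nat \<Rightarrow> nat list list set" where
  "tuples q n l = {xs. length xs = l \<and> (\<forall>x\<in>set xs. x \<in> blocks q n)}"

definition perm_act :: "(nat \<Rightarrow> nat) \<Rightarrow> nat list \<Rightarrow> nat list" where
  "perm_act \<sigma> x = map (\<lambda>i. x ! inv \<sigma> i) [0..<length x]"

definition perm_channel :: "nat \<Rightarrow> nat list \<Rightarrow> nat list \<Rightarrow> real" where
  "perm_channel n y x =
     real (card {\<sigma>. \<sigma> permutes {0..<n} \<and> y = perm_act \<sigma> x}) / fact n"

definition W_l :: "nat \<Rightarrow> nat \<Rightarrow> nat list list \<Rightarrow> nat list list \<Rightarrow> real" where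
  "W_l n l ys xs = (\<Prod>s<l. perm_channel n (ys ! s) (xs ! s))"

text \<open>Messages are indexed 0..M-1; Q i is a distribution on tuples, D i a decoding set.\<close>
definition is_id_code ::
  "nat \<Rightarrow> nat \<Rightarrow> nat \<Rightarrow> nat \<Rightarrow> (nat \<Rightarrow> nat list list \<Rightarrow> real) \<Rightarrow> (nat \<Rightarrow> nat list list set) \<Rightarrow> bool" where
  "is_id_code q n l M Q D \<longleftrightarrow>
     (\<forall>i<M. (\<forall>x\<in>tuples q n l. Q i x \<ge> 0) \<and> (\<Sum>x\<in>tuples q n l. Q i x) = 1
             \<and> D i \<subseteq> tuples q n l)"

definition err_to :: "nat \<Rightarrow> nat \<Rightarrow> nat \<Rightarrow> (nat \<Rightarrow> nat list list \<Rightarrow> real) \<Rightarrow> (nat \<Rightarrow> nat list list set) \<Rightarrow> nat \<Rightarrow> nat \<Rightarrow> real" where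
  "err_to q n l Q D i j =
     (\<Sum>x\<in>tuples q n l. Q i x * (\<Sum>y\<in>D j. W_l n l y x))"

definition err_miss :: "nat \<Rightarrow> nat \<Rightarrow> nat \<Rightarrow> (nat \<Rightarrow> nat list list \<Rightarrow> real) \<Rightarrow> (nat \<Rightarrow> nat list list set) \<Rightarrow> nat \<Rightarrow> real" where
  "err_miss q n l Q D i =
     (\<Sum>x\<in>tuples q n l. Q i x * (\<Sum>y\<in>tuples q n l - D i. W_l n l y x))"

definition type1_err where
  "type1_err q n l M Q D = Max {err_miss q n l Q D i | i. i < M}"

definition type2_err where
  "type2_err q n l M Q D = Max {err_to q n l Q D i j | i j. i < M \<and> j < M \<and> i \<noteq> j}"

end

theory Submission imports Defs begin

lemma sum_lists_prod:
  fixes F :: "nat \<Rightarrow> 'a \<Rightarrow> real"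
  assumes "finite B"
  shows "(\<Sum>s\<in>{s. length s = m \<and> set s \<subseteq> B}. \<Prod>k<m. F k (s!k)) = (\<Prod>k<m. \<Sum>y\<in>B. F k y)"
proof (induction m arbitrary: F)
  case 0
  have "{s. length s = 0 \<and> set s \<subseteq> B} = {[]}" by auto
  then show ?case by simp
next
  case (Suc m)
  have eq: "{s. length s = Suc m \<and> set s \<subseteq> B} = (\<lambda>(y,s). y#s) ` (B \<times> {s. length s = m \<and> set s \<subseteq> B})"
  proof (rule set_eqI, rule iffI)
    fix s assume "s \<in> {s. length s = Suc m \<and> set s \<subseteq> B}"
    then show "s \<in> (\<lambda>(y,s). y#s) ` (B \<times> {s. length s = m \<and> set s \<subseteq> B})"
      by (cases s) (auto intro!: image_eqI)
  qed auto
  have inj: "inj_on (\<lambda>(y,s). y#s) (B \<times> {s. length s = m \<and> set s \<subseteq> B})"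
    by (auto simp: inj_on_def)
  have "(\<Sum>s\<in>{s. length s = Suc m \<and> set s \<subseteq> B}. \<Prod>k<Suc m. F k (s!k))
      = (\<Sum>(y,s)\<in>B \<times> {s. length s = m \<and> set s \<subseteq> B}. F 0 y * (\<Prod>k<m. F (Suc k) (s!k)))"
    unfolding eq by (subst sum.reindex[OF inj]) (simp add: case_prod_beta prod.lessThan_Suc_shift del: prod.lessThan_Suc)
  also have "\<dots> = (\<Sum>y\<in>B. F 0 y) * (\<Sum>s\<in>{s. length s = m \<and> set s \<subseteq> B}. \<Prod>k<m. F (Suc k) (s!k))"
    by (simp add: sum_product sum.cartesian_product)
  also have "\<dots> = (\<Sum>y\<in>B. F 0 y) * (\<Prod>k<m. \<Sum>y\<in>B. F (Suc k) y)"
    using Suc.IH[of "\<lambda>k. F (Suc k)"] by simp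
  also have "\<dots> = (\<Prod>k<Suc m. \<Sum>y\<in>B. F k y)"
    by (simp add: prod.lessThan_Suc_shift del: prod.lessThan_Suc)
  finally show ?case .
qed

lemma finite_L: "finite B \<Longrightarrow> finite {s. length s = m \<and> set s \<subseteq> B}"
  using finite_lists_length_eq[of B m] by (simp add: conj_commute)

lemma finite_blocks: "finite (blocks q n)"
  unfolding blocks_def using finite_L[of "{1..q}" n] by simp

lemma tuples_alt: "tuples q n l = {s. length s = l \<and> set s \<subseteq> blocks q n}"
  unfolding tuples_def by auto

lemma finite_tuples: "finite (tuples q n l)"
  unfolding tuples_alt using finite_L[OF finite_blocks] by blast

lemma perm_act_length[simp]: "length (perm_act \<sigma> x) = length x"
  by (simp add: perm_act_def)

lemma perm_act_nth: "i < length x \<Longrightarrow> perm_act \<sigma> x ! i = x ! inv \<sigma> i"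
  by (simp add: perm_act_def)

lemma inv_perm_lt: "\<sigma> permutes {0..<(n::nat)} \<Longrightarrow> i < n \<Longrightarrow> inv \<sigma> i < n"
  using permutes_in_image[OF permutes_inv, of \<sigma> "{0..<n}" i] by auto

lemma perm_act_blocks:
  assumes "\<sigma> permutes {0..<n}" "x \<in> blocks q n"
  shows "perm_act \<sigma> x \<in> blocks q n"
proof -
  have "set (perm_act \<sigma> x) \<subseteq> set x"
  proof
    fix z assume "z \<in> set (perm_act \<sigma> x)"
    then obtain i where i: "i < length x" "z = perm_act \<sigma> x ! i"
      by (metis in_set_conv_nth perm_act_length)
    have "inv \<sigma> i < length x" using assms i inv_perm_lt unfolding blocks_def by auto
    then show "z \<in> set x" using i perm_act_nth by auto
  qed
  then show ?thesis using assms unfolding blocks_def by auto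
qed

lemma perm_channel_sum:
  assumes "x \<in> blocks q n"
  shows "(\<Sum>y\<in>blocks q n. perm_channel n y x) = 1"
proof -
  let ?P = "{\<sigma>. \<sigma> permutes {0..<n}}"
  have fP: "finite ?P" by (simp add: finite_permutations)
  have "(\<Sum>y\<in>blocks q n. card {\<sigma>. \<sigma> permutes {0..<n} \<and> y = perm_act \<sigma> x})
       = (\<Sum>y\<in>blocks q n. \<Sum>\<sigma>\<in>{\<sigma>. \<sigma> \<in> ?P \<and> perm_act \<sigma> x = y}. (1::nat))"
    by (intro sum.cong) (auto intro: arg_cong[where f=card])
  also have "\<dots> = (\<Sum>\<sigma>\<in>?P. 1)"
    by (rule sum.group[OF fP finite_blocks]) (use assms perm_act_blocks in auto)
  also have "\<dots> = fact n" using card_permutations[of "{0..<n}" n] by simp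
  finally have "real (\<Sum>y\<in>blocks q n. card {\<sigma>. \<sigma> permutes {0..<n} \<and> y = perm_act \<sigma> x}) = fact n"
    by (metis of_nat_fact)
  then show ?thesis unfolding perm_channel_def
    by (simp add: sum_divide_distrib[symmetric])
qed

lemma W_l_sum:
  assumes "xs \<in> tuples q n l"
  shows "(\<Sum>ys\<in>tuples q n l. W_l n l ys xs) = 1"
proof -
  have "(\<Sum>ys\<in>tuples q n l. W_l n l ys xs) = (\<Prod>k<l. \<Sum>y\<in>blocks q n. perm_channel n y (xs!k))"
    unfolding W_l_def tuples_alt by (rule sum_lists_prod[OF finite_blocks])
  also have "\<dots> = 1"
    using assms by (intro prod.neutral) (auto simp: tuples_def perm_channel_sum)
  finally show ?thesis .
qed

lemma W_l_nonneg: "W_l n l ys xs \<ge> 0"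
  unfolding W_l_def perm_channel_def by (intro prod_nonneg) auto

lemma perm_act_permute_list:
  assumes s: "\<sigma> permutes {0..<length b}" and p: "p permutes {..<length b}"
  shows "perm_act \<sigma> (permute_list p b) = perm_act (\<sigma> \<circ> inv p) b"
proof (rule nth_equalityI)
  show "length (perm_act \<sigma> (permute_list p b)) = length (perm_act (\<sigma> \<circ> inv p) b)" by simp
next
  fix i assume "i < length (perm_act \<sigma> (permute_list p b))"
  then have i: "i < length b" by simp
  have bs: "bij \<sigma>" using s permutes_bij by blast
  have bp: "bij p" using p permutes_bij by blast
  have "inv (\<sigma> \<circ> inv p) = inv (inv p) \<circ> inv \<sigma>" using bs bp by (simp add: o_inv_distrib bij_imp_bij_inv)
  also have "inv (inv p) = p" using bp by (simp add: inv_inv_eq)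
  finally have e: "inv (\<sigma> \<circ> inv p) = p \<circ> inv \<sigma>" .
  have "inv \<sigma> i < length b" using inv_perm_lt[OF s i] .
  then show "perm_act \<sigma> (permute_list p b) ! i = perm_act (\<sigma> \<circ> inv p) b ! i"
    using i p by (simp add: perm_act_nth permute_list_nth[OF p] e)
qed

lemma perm_channel_mset:
  assumes m: "mset b = mset b'" and len: "length b = n"
  shows "perm_channel n y b' = perm_channel n y b"
proof -
  have lb': "length b' = n" using m len by (metis size_mset)
  obtain p where p: "p permutes {..<length b}" "permute_list p b = b'"
    using mset_eq_permutation[of b' b] m by metis
  have p': "p permutes {0..<n}" using p len by (simp add: atLeast0LessThan)
  have ip: "inv p permutes {0..<n}" using permutes_inv[OF p'] .
  have "{\<sigma>. \<sigma> permutes {0..<n} \<and> y = perm_act \<sigma> b'} = (\<lambda>\<tau>. \<tau> \<circ> p) ` {\<tau>. \<tau> permutes {0..<n} \<and> y = perm_act \<tau> b}"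
  proof (rule set_eqI, rule iffI)
    fix \<sigma> assume "\<sigma> \<in> {\<sigma>. \<sigma> permutes {0..<n} \<and> y = perm_act \<sigma> b'}"
    then have s: "\<sigma> permutes {0..<n}" "y = perm_act \<sigma> b'" by auto
    have "y = perm_act (\<sigma> \<circ> inv p) b"
      using s perm_act_permute_list[of \<sigma> b p] p len by simp
    moreover have "\<sigma> \<circ> inv p permutes {0..<n}" using permutes_compose[OF ip s(1)] .
    moreover have "\<sigma> = (\<sigma> \<circ> inv p) \<circ> p"
      using p' by (simp add: o_assoc[symmetric] permutes_inv_o(2))
    ultimately show "\<sigma> \<in> (\<lambda>\<tau>. \<tau> \<circ> p) ` {\<tau>. \<tau> permutes {0..<n} \<and> y = perm_act \<tau> b}"
      by blast
  next
    fix \<sigma> assume "\<sigma> \<in> (\<lambda>\<tau>. \<tau> \<circ> p) ` {\<tau>. \<tau> permutes {0..<n} \<and> y = perm_act \<tau> b}"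
    then obtain \<tau> where t: "\<tau> permutes {0..<n}" "y = perm_act \<tau> b" "\<sigma> = \<tau> \<circ> p" by auto
    have sp: "\<sigma> permutes {0..<n}" using permutes_compose[OF p' t(1)] t(3) by simp
    have "\<sigma> \<circ> inv p = \<tau>" using t(3) p' by (simp add: comp_assoc permutes_inv_o(1))
    then have "perm_act \<sigma> b' = y"
      using perm_act_permute_list[of \<sigma> b p] sp p len t(2) by simp
    then show "\<sigma> \<in> {\<sigma>. \<sigma> permutes {0..<n} \<and> y = perm_act \<sigma> b'}" using sp by auto
  qed
  moreover have "inj_on (\<lambda>\<tau>. \<tau> \<circ> p) {\<tau>. \<tau> permutes {0..<n} \<and> y = perm_act \<tau> b}"
  proof (rule inj_onI)
    fix x z assume "x \<circ> p = z \<circ> p"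
    then have "x \<circ> p \<circ> inv p = z \<circ> p \<circ> inv p" by simp
    then show "x = z" using p' by (simp add: comp_assoc permutes_inv_o(1))
  qed
  ultimately show ?thesis unfolding perm_channel_def by (simp add: card_image)
qed

lemma W_l_mset:
  assumes "\<And>s. s < l \<Longrightarrow> mset (xs!s) = mset (xs'!s)" "\<And>s. s < l \<Longrightarrow> length (xs!s) = n"
  shows "W_l n l ys xs' = W_l n l ys xs"
  unfolding W_l_def using assms perm_channel_mset by (intro prod.cong) auto

lemma mset_from_counts:
  fixes b b' :: "nat list"
  assumes "length b = n" "length b' = n" "set b \<subseteq> {1..q}" "set b' \<subseteq> {1..q}"
    and c: "\<And>a. a \<in> {1..<q} \<Longrightarrow> count (mset b) a = count (mset b') a"
  shows "mset b = mset b'"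
proof -
  let ?P = "\<lambda>a. a < q"
  have f1: "filter_mset ?P (mset b) = filter_mset ?P (mset b')"
  proof (rule multiset_eqI)
    fix a
    show "count (filter_mset ?P (mset b)) a = count (filter_mset ?P (mset b')) a"
    proof (cases "a < q \<and> a \<ge> 1")
      case True then show ?thesis using c by auto
    next
      case False
      then have "a \<notin> set b \<or> \<not> a < q" "a \<notin> set b' \<or> \<not> a < q" using assms(3,4) by auto
      then show ?thesis by (metis count_eq_zero_iff count_filter_mset set_mset_mset)
    qed
  qed
  have s1: "set_mset (filter_mset (\<lambda>a. \<not> a < q) (mset b)) \<subseteq> {q}" using assms(3) by fastforce
  have s2: "set_mset (filter_mset (\<lambda>a. \<not> a < q) (mset b')) \<subseteq> {q}" using assms(4) by fastforce
  have "size (filter_mset (\<lambda>a. \<not> a < q) (mset b)) = size (filter_mset (\<lambda>a. \<not> a < q) (mset b'))"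
  proof -
    have "size (mset b) = size (filter_mset ?P (mset b)) + size (filter_mset (\<lambda>a. \<not> a < q) (mset b))"
      by (metis multiset_partition size_union)
    moreover have "size (mset b') = size (filter_mset ?P (mset b')) + size (filter_mset (\<lambda>a. \<not> a < q) (mset b'))"
      by (metis multiset_partition size_union)
    ultimately show ?thesis using f1 assms(1,2) by simp
  qed
  then have f2: "filter_mset (\<lambda>a. \<not> a < q) (mset b) = filter_mset (\<lambda>a. \<not> a < q) (mset b')"
    using set_mset_subset_singletonD[OF s1] set_mset_subset_singletonD[OF s2] by metis
  show ?thesis using f1 f2 by (metis multiset_partition)
qed

definition ty :: "nat \<Rightarrow> nat \<Rightarrow> nat list list \<Rightarrow> (nat \<times> nat \<Rightarrow> nat)" where
  "ty q l xs = restrict (\<lambda>(s,a). count (mset (xs!s)) a) ({0..<l} \<times> {1..<q})"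

lemma ty_range:
  assumes "xs \<in> tuples q n l"
  shows "ty q l xs \<in> PiE ({0..<l} \<times> {1..<q}) (\<lambda>_. {0..n})"
proof -
  have "\<And>s a. s < l \<Longrightarrow> count (mset (xs!s)) a \<le> n"
  proof -
    fix s a assume "s < l"
    then have "xs ! s \<in> blocks q n" using assms unfolding tuples_def by auto
    then have "length (xs!s) = n" unfolding blocks_def by auto
    then show "count (mset (xs!s)) a \<le> n" by (metis count_le_size size_mset)
  qed
  then show ?thesis unfolding ty_def by auto
qed

lemma card_ty_range: "card (PiE ({0..<l} \<times> {1..<q}) (\<lambda>_. {0..n})) = (n+1) ^ (l * (q - 1))"
  by (simp add: card_PiE card_cartesian_product)

lemma ty_eq:
  assumes "xs \<in> tuples q n l" "xs' \<in> tuples q n l" "ty q l xs = ty q l xs'" "s < l"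
  shows "mset (xs!s) = mset (xs'!s)"
proof -
  have b: "xs ! s \<in> blocks q n" "xs' ! s \<in> blocks q n" using assms unfolding tuples_def by auto
  show ?thesis
  proof (rule mset_from_counts[of _ n _ q])
    fix a assume a: "a \<in> {1..<q}"
    have "ty q l xs (s,a) = ty q l xs' (s,a)" using assms(3) by simp
    then show "count (mset (xs ! s)) a = count (mset (xs' ! s)) a" using a assms(4) unfolding ty_def by simp
  qed (use b in \<open>auto simp: blocks_def\<close>)
qed

lemma W_l_ty:
  assumes "xs \<in> tuples q n l" "xs' \<in> tuples q n l" "ty q l xs = ty q l xs'"
  shows "W_l n l ys xs' = W_l n l ys xs"
proof (rule W_l_mset)
  fix s assume "s < l"
  then show "mset (xs ! s) = mset (xs' ! s)" using ty_eq[OF assms] by blast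
  show "length (xs ! s) = n" using assms(1) \<open>s<l\<close> unfolding tuples_def blocks_def by auto
qed

lemma count_small_subsets:
  fixes x :: real
  assumes T: "finite T" and x: "0 < x" "x \<le> 1"
  shows "real (card {C. C \<subseteq> T \<and> card C \<le> m}) \<le> (1 + x) ^ card T / x ^ m"
proof -
  let ?S = "{C. C \<subseteq> T \<and> card C \<le> m}"
  have fS: "finite ?S" by (rule finite_subset[of _ "Pow T"]) (use T in auto)
  have "real (card ?S) = (\<Sum>C\<in>?S. 1)" by simp
  also have "\<dots> \<le> (\<Sum>C\<in>?S. x ^ card C / x ^ m)"
  proof (rule sum_mono)
    fix C assume "C \<in> ?S"
    then have "x ^ m \<le> x ^ card C" using x by (intro power_decreasing) auto
    then show "1 \<le> x ^ card C / x ^ m" using x by simp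
  qed
  also have "\<dots> \<le> (\<Sum>C\<in>Pow T. x ^ card C / x ^ m)"
    using x T by (intro sum_mono2) auto
  also have "\<dots> = (\<Sum>C\<in>Pow T. (\<Prod>a\<in>C. x) * (\<Prod>a\<in>T - C. 1)) / x ^ m"
    by (simp add: sum_divide_distrib)
  also have "\<dots> = (\<Prod>a\<in>T. x + 1) / x ^ m"
    using prod_add[OF T, of "\<lambda>_. x" "\<lambda>_. 1"] by simp
  also have "\<dots> = (1 + x) ^ card T / x ^ m" by (simp add: add.commute)
  finally show ?thesis .
qed

lemma core:
  fixes X :: "'a set" and tp :: "'a \<Rightarrow> 'b" and T :: "'b set" and Q :: "nat \<Rightarrow> 'a \<Rightarrow> real"
    and A :: "nat \<Rightarrow> 'a set" and p :: real
  assumes finX: "finite X" and finT: "finite T" and tyT: "tp ` X \<subseteq> T"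
    and Qnn: "\<And>i x. i < M \<Longrightarrow> x \<in> X \<Longrightarrow> Q i x \<ge> 0"
    and AX: "\<And>i. i < M \<Longrightarrow> A i \<subseteq> X"
    and sat: "\<And>i x y. i < M \<Longrightarrow> x \<in> X \<Longrightarrow> y \<in> A i \<Longrightarrow> tp x = tp y \<Longrightarrow> x \<in> A i"
    and good: "\<And>i. i < M \<Longrightarrow> (\<Sum>x\<in>A i. Q i x) \<ge> 1 - p"
    and bad: "\<And>i j. i < M \<Longrightarrow> j < M \<Longrightarrow> i \<noteq> j \<Longrightarrow> (\<Sum>x\<in>A j. Q i x) \<le> p"
    and p: "0 \<le> p" "p \<le> 1" and Mp: "real (M - 1) * p ^ m < (1 - p) ^ m"
  shows "M \<le> card {C. C \<subseteq> T \<and> card C \<le> m}"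
proof -
  define L where "L B = {s. length s = m \<and> set s \<subseteq> B}" for B :: "'a set"
  have finL: "finite (L B)" if "B \<subseteq> X" for B
    unfolding L_def using finite_L finite_subset[OF that finX] by blast
  have ex: "\<exists>s. length s = m \<and> set s \<subseteq> A i \<and> (\<forall>j<M. j \<noteq> i \<longrightarrow> \<not> set s \<subseteq> A j)" if i: "i < M" for i
  proof (rule ccontr)
    assume nex: "\<not> ?thesis"
    define w where "w s = (\<Prod>k<m. Q i (s!k))" for s
    have wnn: "w s \<ge> 0" if "s \<in> L X" for s
    proof -
      have "\<And>k. k < m \<Longrightarrow> s ! k \<in> X" using that unfolding L_def by auto
      then show ?thesis unfolding w_def using Qnn[OF i] by (intro prod_nonneg) auto
    qed
    have sumL: "(\<Sum>s\<in>L B. w s) = (\<Sum>x\<in>B. Q i x) ^ m" if "B \<subseteq> X" for B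
      unfolding L_def w_def using sum_lists_prod[OF finite_subset[OF that finX], where m=m and F="\<lambda>_. Q i"] by simp
    let ?J = "{j. j < M \<and> j \<noteq> i}"
    have cardJ: "card ?J = M - 1"
    proof -
      have "?J = {..<M} - {i}" by auto
      then show ?thesis using i by simp
    qed
    have "(1 - p) ^ m \<le> (\<Sum>x\<in>A i. Q i x) ^ m"
      using good[OF i] p by (intro power_mono) auto
    also have "\<dots> = (\<Sum>s\<in>L (A i). w s)" using sumL[OF AX[OF i]] by simp
    also have "\<dots> \<le> (\<Sum>s\<in>L (A i). \<Sum>j\<in>?J. if s \<in> L (A j) then w s else 0)"
    proof (rule sum_mono)
      fix s assume s: "s \<in> L (A i)"
      then obtain j where j: "j < M" "j \<noteq> i" "set s \<subseteq> A j" using nex unfolding L_def by blast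
      have sX: "s \<in> L X" using s AX[OF i] unfolding L_def by auto
      have "w s = (if s \<in> L (A j) then w s else 0)" using j s unfolding L_def by auto
      also have "\<dots> \<le> (\<Sum>j\<in>?J. if s \<in> L (A j) then w s else 0)"
        using j wnn[OF sX] by (intro member_le_sum) auto
      finally show "w s \<le> (\<Sum>j\<in>?J. if s \<in> L (A j) then w s else 0)" .
    qed
    also have "\<dots> = (\<Sum>j\<in>?J. \<Sum>s\<in>L (A i). if s \<in> L (A j) then w s else 0)"
      by (rule sum.swap)
    also have "\<dots> \<le> (\<Sum>j\<in>?J. p ^ m)"
    proof (rule sum_mono)
      fix j assume j: "j \<in> ?J"
      have Aj: "A j \<subseteq> X" using AX j by auto
      have "(\<Sum>s\<in>L (A i). if s \<in> L (A j) then w s else 0) = (\<Sum>s\<in>L (A i) \<inter> L (A j). w s)"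
        by (simp add: sum.inter_restrict[OF finL[OF AX[OF i]]] Int_commute)
      also have "\<dots> \<le> (\<Sum>s\<in>L (A j). w s)"
        using Aj wnn by (intro sum_mono2 finL) (auto simp: L_def)
      also have "\<dots> = (\<Sum>x\<in>A j. Q i x) ^ m" using sumL[OF AX] j by auto
      also have "\<dots> \<le> p ^ m"
      proof (rule power_mono)
        show "(\<Sum>x\<in>A j. Q i x) \<le> p" using bad[OF i] j by auto
        show "0 \<le> (\<Sum>x\<in>A j. Q i x)" using j AX Qnn[OF i] by (intro sum_nonneg) auto
      qed
      finally show "(\<Sum>s\<in>L (A i). if s \<in> L (A j) then w s else 0) \<le> p ^ m" .
    qed
    also have "\<dots> = real (M - 1) * p ^ m" using cardJ by simp
    finally show False using Mp by simp
  qed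
  then obtain S where S: "\<And>i. i < M \<Longrightarrow> length (S i) = m \<and> set (S i) \<subseteq> A i \<and> (\<forall>j<M. j \<noteq> i \<longrightarrow> \<not> set (S i) \<subseteq> A j)"
    by metis
  define c where "c i = tp ` set (S i)" for i
  have cin: "c ` {..<M} \<subseteq> {C. C \<subseteq> T \<and> card C \<le> m}"
  proof
    fix C assume "C \<in> c ` {..<M}"
    then obtain i where i: "i < M" "C = c i" by auto
    have "set (S i) \<subseteq> X" using S[OF i(1)] AX[OF i(1)] by auto
    then have "C \<subseteq> T" using tyT i unfolding c_def by auto
    moreover have "card C \<le> m" using i S[OF i(1)] unfolding c_def
      by (metis card_image_le card_length finite_set le_trans)
    ultimately show "C \<in> {C. C \<subseteq> T \<and> card C \<le> m}" by auto
  qed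
  have inj: "inj_on c {..<M}"
  proof (rule inj_onI, rule ccontr)
    fix i j assume i: "i \<in> {..<M}" and j: "j \<in> {..<M}" and e: "c i = c j" and ne: "i \<noteq> j"
    have "set (S i) \<subseteq> A j"
    proof
      fix x assume x: "x \<in> set (S i)"
      then have "tp x \<in> c j" using e unfolding c_def by auto
      then obtain y where y: "y \<in> set (S j)" "tp x = tp y" unfolding c_def by auto
      have "x \<in> X" using x S i AX by blast
      moreover have "y \<in> A j" using y S j by blast
      ultimately show "x \<in> A j" using sat j y by auto
    qed
    then show False using S i j ne by auto
  qed
  have fin: "finite {C. C \<subseteq> T \<and> card C \<le> m}" by (rule finite_subset[of _ "Pow T"]) (use finT in auto)
  have "M = card (c ` {..<M})" using card_image[OF inj] by simp
  also have "\<dots> \<le> card {C. C \<subseteq> T \<and> card C \<le> m}" using card_mono[OF fin cin] .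
  finally show ?thesis .
qed

definition xc :: "real \<Rightarrow> real" where "xc R = min 1 (R * ln 2 / 12)"
definition cc :: "real \<Rightarrow> real" where "cc R = - ln (xc R)"
definition dc :: "real \<Rightarrow> real" where "dc R = min (1/4) (1 / (1 + exp (4 * cc R)))"

lemma analytic:
  fixes n k m K :: nat and R N p :: real
  assumes R: "R > 0" and n1: "n \<ge> 1" and kn: "k \<le> n" and NN: "N = real n ^ k" and k1: "k \<ge> 1"
    and K: "K = (n+1)^k" and p0: "0 < p" and pd: "p \<le> dc R"
    and nbig: "real n \<ge> 4 * cc R / (R * ln 2)"
    and m: "m = nat \<lceil>R * N * ln 2 / ln ((1-p)/p)\<rceil>"
  shows "2 powr (R * N) * p ^ m \<le> (1 - p) ^ m"
    and "(1 + xc R) ^ K / xc R ^ m < 2 powr (R * N)"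
proof -
  define x where "x = xc R"
  define c where "c = cc R"
  define Lg where "Lg = ln ((1-p)/p)"
  have x0: "0 < x" "x \<le> 1" "x \<le> R * ln 2 / 12" using R unfolding x_def xc_def by auto
  have c0: "c \<ge> 0" unfolding c_def cc_def x_def[symmetric] using x0 by simp
  have p4: "p \<le> 1/4" using pd unfolding dc_def by simp
  have pe: "p * (1 + exp (4*c)) \<le> 1"
  proof -
    have "p \<le> 1 / (1 + exp (4*c))" using pd unfolding dc_def c_def by simp
    moreover have "0 < 1 + exp (4*c)" by (simp add: add_pos_pos)
    ultimately show ?thesis by (simp add: le_divide_eq)
  qed
  have q3: "(1-p)/p \<ge> 3" using p4 p0 by (simp add: field_simps)
  have Lpos: "Lg > 0" unfolding Lg_def using q3 by simp
  have "exp (4*c) \<le> (1-p)/p" using pe p0 by (simp add: field_simps)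
  then have "ln (exp (4*c)) \<le> ln ((1-p)/p)" using q3 by (subst ln_le_cancel_iff) auto
  then have L4: "4 * c \<le> Lg" unfolding Lg_def by simp
  have N1: "N \<ge> real n" unfolding NN using n1 k1 power_increasing[of 1 k "real n"] by simp
  have Npos: "N > 0" using N1 n1 by linarith
  have RN: "R * N * ln 2 > 0" using R Npos by simp
  have mge: "real m \<ge> R * N * ln 2 / Lg" unfolding m Lg_def by (rule real_nat_ceiling_ge)
  have mle: "real m \<le> R * N * ln 2 / Lg + 1"
  proof -
    have "R * N * ln 2 / Lg > 0" using RN Lpos by simp
    then have "real m = real_of_int \<lceil>R * N * ln 2 / Lg\<rceil>" unfolding m Lg_def[symmetric] by simp
    then show ?thesis by (metis of_int_ceiling_le_add_one)
  qed
  have mL: "real m * Lg \<ge> R * N * ln 2" using mge Lpos by (simp add: field_simps)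
  have "2 powr (R * N) = exp (R * N * ln 2)" by (simp add: powr_def mult.commute)
  also have "\<dots> \<le> exp (real m * Lg)" using mL by simp
  also have "\<dots> = ((1-p)/p) ^ m" unfolding Lg_def using q3
    by (metis exp_of_nat_mult exp_ln less_le_trans zero_less_numeral)
  finally have "2 powr (R * N) * p ^ m \<le> ((1-p)/p) ^ m * p ^ m" using p0 by simp
  also have "\<dots> = (1 - p) ^ m" using p0 by (simp add: power_divide field_simps)
  finally show "2 powr (R * N) * p ^ m \<le> (1 - p) ^ m" .
  have "real K = N * (1 + 1 / real n) ^ k" unfolding K NN using n1
    by (simp add: power_mult_distrib[symmetric] field_simps)
  also have "(1 + 1 / real n) ^ k \<le> exp (1 / real n) ^ k"
    by (intro power_mono) (auto simp: add.commute exp_ge_add_one_self_aux)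
  also have "exp (1 / real n) ^ k = exp (real k / real n)"
    by (simp add: exp_of_nat_mult[symmetric])
  also have "\<dots> \<le> exp 1" using kn n1 by (simp add: field_simps)
  also have "\<dots> \<le> 3" by (rule exp_le)
  finally have K3: "real K \<le> N * 3" using Npos by simp
  have "(1 + x) ^ K \<le> exp x ^ K"
    using x0 by (intro power_mono) (auto simp: add.commute exp_ge_add_one_self_aux)
  also have "\<dots> = exp (real K * x)" by (simp add: exp_of_nat_mult)
  also have "\<dots> \<le> exp (R * N * ln 2 / 4)"
  proof -
    have "real K * x \<le> (N * 3) * (R * ln 2 / 12)"
      using K3 x0 Npos by (intro mult_mono) auto
    then show ?thesis by (simp add: mult_ac)
  qed
  finally have A1: "(1 + x) ^ K \<le> exp (R * N * ln 2 / 4)" .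
  have xm: "x ^ m = exp (real m * ln x)" using x0 by (simp add: exp_of_nat_mult)
  have "real m * c \<le> (R * N * ln 2 / Lg + 1) * c" using mle c0 by (intro mult_right_mono) auto
  also have "\<dots> = R * N * ln 2 * (c / Lg) + c" by (simp add: field_simps)
  also have "\<dots> \<le> R * N * ln 2 * (1/4) + R * N * ln 2 / 4"
  proof (intro add_mono mult_left_mono)
    show "c / Lg \<le> 1/4" using L4 Lpos by (simp add: field_simps)
    show "0 \<le> R * N * ln 2" using RN by simp
    have "4 * cc R / (R * ln 2) * (R * ln 2) \<le> real n * (R * ln 2)"
      using nbig R by (intro mult_right_mono) auto
    then have "4 * c \<le> real n * (R * ln 2)" using R unfolding c_def by simp
    also have "\<dots> \<le> N * (R * ln 2)" using N1 R by (intro mult_right_mono) auto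
    finally show "c \<le> R * N * ln 2 / 4" by (simp add: field_simps)
  qed
  finally have mc: "real m * c \<le> R * N * ln 2 / 2" by (simp add: mult_ac)
  have "(1 + x) ^ K / x ^ m = (1 + x) ^ K * exp (real m * c)"
    unfolding xm c_def cc_def x_def[symmetric] by (simp add: exp_minus field_simps)
  also have "\<dots> \<le> exp (R * N * ln 2 / 4) * exp (R * N * ln 2 / 2)"
    using A1 mc by (intro mult_mono) auto
  also have "\<dots> = exp (R * N * ln 2 * (3/4))" by (simp add: exp_add[symmetric])
  also have "\<dots> < exp (R * N * ln 2)" using RN by (simp add: mult_ac)
  also have "\<dots> = 2 powr (R * N)" by (simp add: powr_def mult.commute)
  finally show "(1 + xc R) ^ K / xc R ^ m < 2 powr (R * N)" unfolding x_def .
qed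


lemma fixed_contra:
  fixes q n l M :: nat and R e :: real and Q :: "nat \<Rightarrow> nat list list \<Rightarrow> real"
    and D :: "nat \<Rightarrow> nat list list set"
  assumes q: "q \<ge> 2" and R: "R > 0" and n1: "n \<ge> 1" and l1: "l \<ge> 1"
    and ln: "l * (q - 1) \<le> n"
    and code: "is_id_code q n l M Q D"
    and MR: "real M \<ge> 2 powr (R * real n ^ (l * (q - 1)))"
    and e1: "type1_err q n l M Q D < e" and e2: "type2_err q n l M Q D < e"
    and e0: "e > 0" and esmall: "2 * e \<le> dc R"
    and nbig: "real n \<ge> 4 * cc R / (R * ln 2)"
  shows False
proof -
  define k where "k = l * (q - 1)"
  define N where "N = real n ^ k"
  have kn: "k \<le> n" using ln unfolding k_def .
  define X where "X = tuples q n l"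
  define T where "T = PiE ({0..<l} \<times> {1..<q}) (\<lambda>_. {0..n})"
  define K where "K = card T"
  define p where "p = 2 * e"
  define Lg where "Lg = ln ((1-p)/p)"
  define m where "m = nat \<lceil>R * N * ln 2 / ln ((1-p)/p)\<rceil>"
  define M' where "M' = nat \<lceil>2 powr (R * N)\<rceil>"
  define x where "x = xc R"
  have k1: "k \<ge> 1" unfolding k_def using q l1 by simp
  have KK: "K = (n+1)^k" unfolding K_def T_def k_def by (rule card_ty_range)
  have p0: "0 < p" using e0 unfolding p_def by simp
  have pd: "p \<le> dc R" using esmall unfolding p_def .
  have p4: "p \<le> 1/4" using pd unfolding dc_def by simp
  note an = analytic[OF R n1 kn N_def k1 KK p0 pd nbig m_def]
  have an1: "2 powr (R * N) * p ^ m \<le> (1 - p) ^ m" using an by auto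
  have an2: "(1 + x) ^ K / x ^ m < 2 powr (R * N)" using an unfolding x_def by auto
  have x0: "0 < x" "x \<le> 1" using R unfolding x_def xc_def by auto
  have M'M: "M' \<le> M"
  proof -
    have "\<lceil>2 powr (R * N)\<rceil> \<le> int M" using MR unfolding N_def k_def by (simp add: ceiling_le_iff)
    then show ?thesis unfolding M'_def using nat_le_iff by blast
  qed
  have M'ge: "real M' \<ge> 2 powr (R * N)" unfolding M'_def by (rule real_nat_ceiling_ge)
  have M'lt: "real M' < 2 powr (R * N) + 1"
  proof -
    have "real M' = real_of_int \<lceil>2 powr (R * N)\<rceil>" unfolding M'_def by simp
    then show ?thesis by linarith
  qed
  have M'1: "M' \<ge> 1"
  proof -
    have "(0::real) < 2 powr (R * N)" by simp
    then have "real M' > 0" using M'ge by linarith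
    then show ?thesis by simp
  qed
  have Mp: "real (M' - 1) * p ^ m < (1 - p) ^ m"
  proof -
    have "real (M' - 1) = real M' - 1" using M'1 by simp
    then have "real (M' - 1) < 2 powr (R * N)" using M'lt by simp
    then have "real (M' - 1) * p ^ m < 2 powr (R * N) * p ^ m" using p0 by simp
    then show ?thesis using an1 by simp
  qed
  have Qnn: "\<And>i x. i < M \<Longrightarrow> x \<in> X \<Longrightarrow> Q i x \<ge> 0" using code unfolding is_id_code_def X_def by blast
  have Q1: "\<And>i. i < M \<Longrightarrow> (\<Sum>x\<in>X. Q i x) = 1" using code unfolding is_id_code_def X_def by blast
  have DX: "\<And>i. i < M \<Longrightarrow> D i \<subseteq> X" using code unfolding is_id_code_def X_def by blast
  have finX: "finite X" unfolding X_def by (rule finite_tuples)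
  define g where "g j x = (\<Sum>y\<in>D j. W_l n l y x)" for j x
  define u where "u j x = (\<Sum>y\<in>X - D j. W_l n l y x)" for j x
  have gu: "g j x + u j x = 1" if "j < M" "x \<in> X" for j x
  proof -
    have "g j x + u j x = (\<Sum>y\<in>X. W_l n l y x)"
      unfolding g_def u_def using DX[OF that(1)] finX by (metis sum.subset_diff add.commute)
    also have "\<dots> = 1" using W_l_sum that(2) unfolding X_def by blast
    finally show ?thesis .
  qed
  have gnn: "g j x \<ge> 0" for j x unfolding g_def by (intro sum_nonneg W_l_nonneg)
  have unn: "u j x \<ge> 0" for j x unfolding u_def by (intro sum_nonneg W_l_nonneg)
  have miss: "(\<Sum>x\<in>X. Q i x * u i x) < e" if "i < M" for i
  proof -
    have "err_miss q n l Q D i \<le> type1_err q n l M Q D"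
      unfolding type1_err_def using that by (intro Max_ge) auto
    then show ?thesis using e1 unfolding err_miss_def u_def X_def by simp
  qed
  have to: "(\<Sum>x\<in>X. Q i x * g j x) < e" if "i < M" "j < M" "i \<noteq> j" for i j
  proof -
    have fin: "finite {err_to q n l Q D i j |i j. i < M \<and> j < M \<and> i \<noteq> j}"
    proof -
      have "{err_to q n l Q D i j |i j. i < M \<and> j < M \<and> i \<noteq> j} \<subseteq> (\<lambda>(i,j). err_to q n l Q D i j) ` ({..<M} \<times> {..<M})"
        by auto
      then show ?thesis by (rule finite_subset) auto
    qed
    have "err_to q n l Q D i j \<le> type2_err q n l M Q D"
      unfolding type2_err_def using that by (intro Max_ge[OF fin]) auto
    then show ?thesis using e2 unfolding err_to_def g_def X_def by simp
  qed
  define A where "A j = {x\<in>X. g j x \<ge> 1/2}" for j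
  have good: "(\<Sum>x\<in>A i. Q i x) \<ge> 1 - p" if i: "i < M'" for i
  proof -
    have iM: "i < M" using i M'M by simp
    have AX: "A i \<subseteq> X" unfolding A_def by auto
    have "(\<Sum>x\<in>X - A i. Q i x) \<le> (\<Sum>x\<in>X - A i. 2 * (Q i x * u i x))"
    proof (rule sum_mono)
      fix x assume x: "x \<in> X - A i"
      then have "g i x < 1/2" unfolding A_def by auto
      then have "u i x > 1/2" using gu[OF iM, of x] x by simp
      have "Q i x * 1 \<le> Q i x * (2 * u i x)"
        using Qnn[OF iM, of x] x \<open>u i x > 1/2\<close> by (intro mult_left_mono) auto
      then show "Q i x \<le> 2 * (Q i x * u i x)" by (simp add: mult_ac)
    qed
    also have "\<dots> \<le> (\<Sum>x\<in>X. 2 * (Q i x * u i x))"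
      using finX Qnn[OF iM] unn by (intro sum_mono2) auto
    also have "\<dots> = 2 * (\<Sum>x\<in>X. Q i x * u i x)" by (simp add: sum_distrib_left)
    also have "\<dots> < 2 * e" using miss[OF iM] by simp
    finally have "(\<Sum>x\<in>X - A i. Q i x) < p" unfolding p_def .
    moreover have "(\<Sum>x\<in>X. Q i x) = (\<Sum>x\<in>A i. Q i x) + (\<Sum>x\<in>X - A i. Q i x)"
      using sum.subset_diff[OF AX finX] by (simp add: add.commute)
    ultimately show ?thesis using Q1[OF iM] by simp
  qed
  have bad: "(\<Sum>x\<in>A j. Q i x) \<le> p" if "i < M'" "j < M'" "i \<noteq> j" for i j
  proof -
    have iM: "i < M" "j < M" using that M'M by auto
    have "(\<Sum>x\<in>A j. Q i x) \<le> (\<Sum>x\<in>A j. 2 * (Q i x * g j x))"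
    proof (rule sum_mono)
      fix x assume x: "x \<in> A j"
      then have "g j x \<ge> 1/2" "x \<in> X" unfolding A_def by auto
      then have "Q i x * 1 \<le> Q i x * (2 * g j x)"
        using Qnn[OF iM(1), of x] by (intro mult_left_mono) auto
      then show "Q i x \<le> 2 * (Q i x * g j x)" by (simp add: mult_ac)
    qed
    also have "\<dots> \<le> (\<Sum>x\<in>X. 2 * (Q i x * g j x))"
      using finX Qnn[OF iM(1)] gnn unfolding A_def by (intro sum_mono2) auto
    also have "\<dots> = 2 * (\<Sum>x\<in>X. Q i x * g j x)" by (simp add: sum_distrib_left)
    also have "\<dots> \<le> 2 * e" using to[OF iM that(3)] by simp
    finally show ?thesis unfolding p_def .
  qed
  have sat: "x \<in> A j" if "j < M'" "x \<in> X" "y \<in> A j" "ty q l x = ty q l y" for j x y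
  proof -
    have yX: "y \<in> X" using that(3) unfolding A_def by auto
    have "g j x = g j y" unfolding g_def
      using W_l_ty[of y q n l x] yX that(2,4) unfolding X_def by (intro sum.cong) auto
    then show ?thesis using that unfolding A_def by auto
  qed
  have "M' \<le> card {C. C \<subseteq> T \<and> card C \<le> m}"
  proof (rule core[where X=X and tp="ty q l" and Q=Q and A=A and p=p])
    show "finite X" by (rule finX)
    show "finite T" unfolding T_def by (intro finite_PiE) auto
    show "ty q l ` X \<subseteq> T" unfolding T_def X_def using ty_range by blast
    show "\<And>i x. i < M' \<Longrightarrow> x \<in> X \<Longrightarrow> Q i x \<ge> 0" using Qnn M'M by auto
    show "\<And>i. i < M' \<Longrightarrow> A i \<subseteq> X" unfolding A_def by auto
    show "\<And>i x y. i < M' \<Longrightarrow> x \<in> X \<Longrightarrow> y \<in> A i \<Longrightarrow> ty q l x = ty q l y \<Longrightarrow> x \<in> A i"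
      using sat by blast
    show "\<And>i. i < M' \<Longrightarrow> (\<Sum>x\<in>A i. Q i x) \<ge> 1 - p" using good by blast
    show "\<And>i j. i < M' \<Longrightarrow> j < M' \<Longrightarrow> i \<noteq> j \<Longrightarrow> (\<Sum>x\<in>A j. Q i x) \<le> p" using bad by blast
    show "0 \<le> p" "p \<le> 1" using p0 p4 by auto
    show "real (M' - 1) * p ^ m < (1 - p) ^ m" by (rule Mp)
  qed
  then have "real M' \<le> real (card {C. C \<subseteq> T \<and> card C \<le> m})" by simp
  also have "\<dots> \<le> (1 + x) ^ card T / x ^ m"
    using count_small_subsets[of T x m] x0 unfolding T_def by (auto intro: finite_PiE)
  also have "\<dots> < 2 powr (R * N)" using an2 unfolding K_def .
  finally show False using M'ge by simp
qed


theorem theorem2: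
  fixes q :: nat and \<mu> R :: real
  assumes "q \<ge> 2" and "\<mu> > 0" and "R > 0"
  shows "\<not> (\<exists>(n :: nat \<Rightarrow> nat) (l :: nat \<Rightarrow> nat) (M :: nat \<Rightarrow> nat)
              (Q :: nat \<Rightarrow> nat \<Rightarrow> nat list list \<Rightarrow> real) (D :: nat \<Rightarrow> nat \<Rightarrow> nat list list set).
           filterlim n at_top sequentially \<and>
           ((\<lambda>i. real (l i) / real (n i) powr min 1 (\<mu> / 4)) \<longlonglongrightarrow> 0) \<and>
           (\<forall>i. n i \<ge> 1 \<and> l i \<ge> 1 \<and> is_id_code q (n i) (l i) (M i) (Q i) (D i) \<and>
                real (M i) \<ge> 2 powr (R * real (n i) ^ (l i * (q - 1))) \<and>
                type1_err q (n i) (l i) (M i) (Q i) (D i) < real (n i) powr (- \<mu>) \<and>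
                type2_err q (n i) (l i) (M i) (Q i) (D i) < real (n i) powr (- \<mu>)))"
proof
  assume "\<exists>(n :: nat \<Rightarrow> nat) (l :: nat \<Rightarrow> nat) (M :: nat \<Rightarrow> nat)
              (Q :: nat \<Rightarrow> nat \<Rightarrow> nat list list \<Rightarrow> real) (D :: nat \<Rightarrow> nat \<Rightarrow> nat list list set).
           filterlim n at_top sequentially \<and>
           ((\<lambda>i. real (l i) / real (n i) powr min 1 (\<mu> / 4)) \<longlonglongrightarrow> 0) \<and>
           (\<forall>i. n i \<ge> 1 \<and> l i \<ge> 1 \<and> is_id_code q (n i) (l i) (M i) (Q i) (D i) \<and>
                real (M i) \<ge> 2 powr (R * real (n i) ^ (l i * (q - 1))) \<and>
                type1_err q (n i) (l i) (M i) (Q i) (D i) < real (n i) powr (- \<mu>) \<and>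
                type2_err q (n i) (l i) (M i) (Q i) (D i) < real (n i) powr (- \<mu>))"
  then obtain n l M Q D where lim: "filterlim n at_top sequentially"
    and ll: "(\<lambda>i. real (l i) / real (n i) powr min 1 (\<mu> / 4)) \<longlonglongrightarrow> 0"
    and H: "\<And>i. n i \<ge> 1 \<and> l i \<ge> 1 \<and> is_id_code q (n i) (l i) (M i) (Q i) (D i) \<and>
                real (M i) \<ge> 2 powr (R * real (n i) ^ (l i * (q - 1))) \<and>
                type1_err q (n i) (l i) (M i) (Q i) (D i) < real (n i) powr (- \<mu>) \<and>
                type2_err q (n i) (l i) (M i) (Q i) (D i) < real (n i) powr (- \<mu>)"
    by blast
  define \<omega> where "\<omega> = min 1 (\<mu> / 4)"
  have rlim: "filterlim (\<lambda>i. real (n i)) at_top sequentially"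
    using filterlim_compose[OF filterlim_real_sequentially lim] by (simp add: o_def)
  have dpos: "dc R > 0" unfolding dc_def by (simp add: add_pos_pos)
  have ev1: "eventually (\<lambda>i. real (n i) powr (- \<mu>) < dc R / 2) sequentially"
  proof -
    have "((\<lambda>i. real (n i) powr (- \<mu>)) \<longlongrightarrow> 0) sequentially"
      using tendsto_neg_powr[of "- \<mu>", OF _ rlim] assms(2) by simp
    then show ?thesis using dpos by (intro order_tendstoD(2)) auto
  qed
  have ev2: "eventually (\<lambda>i. real (n i) \<ge> 4 * cc R / (R * ln 2)) sequentially"
    using rlim by (simp add: filterlim_at_top)
  have qpos: "real (q - 1) > 0" using assms(1) by simp
  have ev3: "eventually (\<lambda>i. real (l i) / real (n i) powr \<omega> < 1 / real (q - 1)) sequentially"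
    using ll qpos unfolding \<omega>_def by (intro order_tendstoD(2)) auto
  obtain i where i1: "real (n i) powr (- \<mu>) < dc R / 2" and i2: "real (n i) \<ge> 4 * cc R / (R * ln 2)"
    and i3: "real (l i) / real (n i) powr \<omega> < 1 / real (q - 1)"
    using eventually_happens'[OF _ eventually_conj[OF ev1 eventually_conj[OF ev2 ev3]]] by auto
  have n1: "n i \<ge> 1" using H by blast
  have npos: "real (n i) powr \<omega> > 0" using n1 by simp
  have "real (l i) * real (q - 1) < real (n i) powr \<omega>"
    using i3 npos qpos by (simp add: field_simps)
  also have "\<dots> \<le> real (n i) powr 1"
    using n1 unfolding \<omega>_def by (intro powr_mono) auto
  also have "\<dots> = real (n i)" using n1 by simp
  finally have "real (l i * (q - 1)) < real (n i)" by simp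
  then have lnq: "l i * (q - 1) \<le> n i" by linarith
  show False
    apply (rule fixed_contra[of q R "n i" "l i" "M i" "Q i" "D i" "real (n i) powr (- \<mu>)"])
    using H[of i] assms lnq i1 i2 n1 by auto
qed

end
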